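(* Let $N\geq 2$ be an integer and let $\mu,m,q$ be independent indeterminates over $\mathbb C$. Then the polynomial $$P(X)=X^{2N-1}+\mu^{N}m\,q\,X^{N-1}+\mu^{2N-1}q^{2}$$ is irreducible in $\mathbb C(\mu,m,q)[X]$. Equivalently, its $2N-1$ roots, regarded as multivalued algebraic functions of $(\mu,m,q)$, are permuted transitively by analytic continuation along closed loops in the parameter space.
   Context: Physical meaning (for orientation only): this is the polynomial equation satisfied by the glueball operator $S$ in the $\mathrm U(N)$ gauge theory with one adjoint field $\phi$, a single flavour of quarks of mass $m$, and tree-level superpotential $\frac12\mu\,\mathrm{Tr}\,\phi^2+\tilde Q(\phi-m)Q$, with instanton factor $q$. Its $2N-1$ roots are the glueball condensates in the $N$ "confining" vacua (unbroken $\mathrm U(N)$) and the $N-1$ "Higgs" vacua (gauge group broken to $\mathrm U(N-1)$); the statement that these vacua can all be smoothly connected to each other (a single phase) is the irreducibility of $P$. *)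

theory Defs
  imports "HOL-Computational_Algebra.Computational_Algebra"
begin

text \<open>The polynomial ring C[mu,m,q] is modelled as the iterated polynomial ring
  complex poly poly poly (innermost variable mu, then m, outermost q); the field
  C(mu,m,q) of rational functions is its fraction field.\<close>

type_synonym ring3 = "complex poly poly poly"
type_synonym ratfun3 = "ring3 fract"

definition var_mu :: ring3 where "var_mu = [:[:[:0, 1:]:]:]"
definition var_m  :: ring3 where "var_m  = [:[:0, 1:]:]"
definition var_q  :: ring3 where "var_q  = [:0, 1:]"

definition emb3 :: "ring3 \<Rightarrow> ratfun3" where "emb3 a = Fract a 1"

definition P_glue :: "nat \<Rightarrow> ratfun3 poly" where
  "P_glue N = monom 1 (2*N - 1)
     + monom (emb3 (var_mu ^ N * var_m * var_q)) (N - 1)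
     + [: emb3 (var_mu ^ (2*N - 1) * var_q ^ 2) :]"

end

theory Submission
  imports Defs "HOL-Computational_Algebra.Field_as_Ring"
begin

lemma map_poly_add_hom:
  assumes "\<And>x y. f (x+y) = f x + f y" "f 0 = 0"
  shows "map_poly f (p+q) = map_poly f p + map_poly f q"
  by (simp add: poly_eq_iff coeff_map_poly assms)

lemma map_poly_smult_hom:
  assumes "\<And>x y. f (x*y) = f x * f y" "f 0 = 0"
  shows "map_poly f (smult a q) = smult (f a) (map_poly f q)"
  by (simp add: poly_eq_iff coeff_map_poly assms)

lemma map_poly_mult_hom:
  fixes f :: "'a::comm_semiring_0 \<Rightarrow> 'b::comm_semiring_0"
  assumes add: "\<And>x y. f (x+y) = f x + f y" and mult: "\<And>x y. f (x*y) = f x * f y" and z: "f 0 = 0"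
  shows "map_poly f (p*q) = map_poly f p * map_poly f q"
proof (induction p)
  case 0 then show ?case by simp
next
  case (pCons a p)
  have "map_poly f (pCons a p * q) = map_poly f (smult a q + pCons 0 (p*q))" by simp
  also have "\<dots> = smult (f a) (map_poly f q) + pCons 0 (map_poly f p * map_poly f q)"
    by (simp add: map_poly_add_hom[OF add z] map_poly_smult_hom[OF mult z] map_poly_pCons z pCons.IH)
  also have "\<dots> = map_poly f (pCons a p) * map_poly f q" by (simp add: map_poly_pCons z)
  finally show ?case .
qed

definition phi :: "ring3 \<Rightarrow> complex poly poly" where
  "phi r = map_poly (\<lambda>c. [:c:]) (map_poly (\<lambda>s. poly s 1) (poly r 1))"

lemma phi_0[simp]: "phi 0 = 0" by (simp add: phi_def)
lemma phi_1[simp]: "phi 1 = 1" by (simp add: phi_def)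

lemma phi_add: "phi (x + y) = phi x + phi y"
  unfolding phi_def
  by (simp add: poly_add map_poly_add_hom[where f="\<lambda>s. poly s 1"] poly_add
      map_poly_add_hom[where f="\<lambda>c. [:c:]"])

lemma phi_mult: "phi (x * y) = phi x * phi y"
  unfolding phi_def
  by (simp add: poly_mult map_poly_mult_hom[where f="\<lambda>s. poly s 1"] poly_add
      map_poly_mult_hom[where f="\<lambda>c. [:c:]"])

lemma phi_power: "phi (x ^ n) = phi x ^ n"
  by (induction n) (simp_all add: phi_mult)

lemma phi_mu: "phi var_mu = 1" by (simp add: phi_def var_mu_def one_pCons map_poly_pCons)
lemma phi_m: "phi var_m = [:0,1:]" by (simp add: phi_def var_m_def one_pCons map_poly_pCons)
lemma phi_q: "phi var_q = 1" by (simp add: phi_def var_q_def one_pCons map_poly_pCons)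

definition psi :: "ring3 poly \<Rightarrow> complex poly poly" where
  "psi a = poly (map_poly phi a) [:[:0,1:]:]"

lemma psi_add: "psi (a + b) = psi a + psi b"
  by (simp add: psi_def map_poly_add_hom phi_add poly_add)

lemma psi_mult: "psi (a * b) = psi a * psi b"
  by (simp add: psi_def map_poly_mult_hom phi_add phi_mult poly_mult)

lemma psi_monom: "psi (monom c n) = phi c * [:[:0,1:]:] ^ n"
  by (simp add: psi_def map_poly_monom poly_monom)

lemma psi_const: "psi [:c:] = phi c"
  by (simp add: psi_def map_poly_pCons)

definition eps :: "ring3 \<Rightarrow> complex" where
  "eps r = poly (poly (poly r 1) 0) 1"

lemma eps_0[simp]: "eps 0 = 0" by (simp add: eps_def)
lemma eps_1[simp]: "eps 1 = 1" by (simp add: eps_def)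
lemma eps_mult: "eps (x * y) = eps x * eps y" by (simp add: eps_def poly_mult)

lemma phi_at0: "poly (phi a) 0 = [:eps a:]"
  by (simp add: phi_def eps_def poly_0_coeff_0 coeff_map_poly)

lemma psi_coeff0: "poly (psi b) 0 = map_poly eps b"
proof (induction b)
  case 0 then show ?case by (simp add: psi_def map_poly_pCons)
next
  case (pCons a b)
  have "psi (pCons a b) = phi a + [:[:0,1:]:] * psi b"
    by (simp add: psi_def map_poly_pCons)
  then have "poly (psi (pCons a b)) 0 = [:eps a:] + [:0,1:] * map_poly eps b"
    by (simp add: poly_add poly_mult phi_at0 pCons.IH)
  also have "\<dots> = map_poly eps (pCons a b)"
    by (simp add: map_poly_pCons)
  finally show ?case .
qed

theorem lemma4p1:
  fixes N :: nat
  assumes "N \<ge> 2"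
  shows "irreducible (P_glue N)"
proof -
  define X :: "complex poly" where "X = [:0,1:]"
  define c1 :: ring3 where "c1 = var_mu ^ N * var_m * var_q"
  define c0 :: ring3 where "c0 = var_mu ^ (2*N - 1) * var_q ^ 2"
  define p :: "ring3 poly" where "p = monom 1 (2*N-1) + monom c1 (N-1) + [:c0:]"
  define F :: "complex poly poly" where "F = [:X^(2*N-1) + 1, X^(N-1):]"
  have P: "P_glue N = fract_poly p"
    by (simp add: P_glue_def p_def c1_def c0_def emb3_def to_fract_def[symmetric] map_poly_monom map_poly_pCons)
  have cp: "coeff p n = (if n = 2*N-1 then 1 else 0) + (if n = N-1 then c1 else 0) + (if n = 0 then c0 else 0)" for n
    using assms by (auto simp add: p_def coeff_monom coeff_pCons split: nat.split)
  have lc: "coeff p (2*N-1) = 1" using assms by (simp add: cp)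
  have deg: "degree p = 2*N-1"
  proof (rule antisym)
    show "degree p \<le> 2*N-1" by (rule degree_le) (use assms in \<open>auto simp: cp\<close>)
    show "2*N-1 \<le> degree p" by (rule le_degree) (use lc in simp)
  qed
  have lcp: "lead_coeff p = 1" using deg lc by simp
  have cont: "content p = 1"
  proof -
    have "content p dvd coeff p (degree p)" by (rule content_dvd_coeff)
    then have u: "is_unit (content p)" by (simp add: lcp)
    have "content p = normalize (content p)" by simp
    also have "\<dots> = 1" using u by (rule is_unit_normalize)
    finally show ?thesis .
  qed
  have phic1: "phi c1 = [:0,1:]" by (simp add: c1_def phi_mult phi_power phi_mu phi_m phi_q)
  have phic0: "phi c0 = 1" by (simp add: c0_def phi_mult phi_power phi_mu phi_m phi_q)
  have psip: "psi p = F"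
    by (simp add: p_def psi_add psi_monom psi_const phic1 phic0 F_def X_def poly_const_pow) (simp add: one_pCons)
  have F0: "F \<noteq> 0" and degF: "degree F = 1" by (simp_all add: F_def X_def)
  have key: "b dvd 1" if ab: "a * b = p" and db: "degree (psi b) = 0" for a b
  proof -
    define h where "h = coeff (psi b) 0"
    have pb: "psi b = [:h:]" using db unfolding h_def by (metis degree_0_id)
    have "psi a * [:h:] = F" using ab psip pb by (metis psi_mult)
    then have Fe: "F = smult h (psi a)" by (simp add: mult.commute)
    have d1: "h dvd X^(N-1)" using arg_cong[OF Fe, of "\<lambda>q. coeff q 1"] by (simp add: F_def)
    have d2: "h dvd X^(2*N-1) + 1" using arg_cong[OF Fe, of "\<lambda>q. coeff q 0"] by (simp add: F_def)
    have dh: "degree h = 0"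
    proof (rule ccontr)
      assume "degree h \<noteq> 0"
      then obtain z where z: "poly h z = 0" using alg_closed_imp_poly_has_root by blast
      from d1 obtain k where "X^(N-1) = h * k" by (elim dvdE)
      then have "poly (X^(N-1)) z = 0" using z by simp
      then have "z = 0" by (simp add: X_def)
      from d2 obtain k' where "X^(2*N-1) + 1 = h * k'" by (elim dvdE)
      then have "poly (X^(2*N-1) + 1) z = 0" using z by simp
      then show False using \<open>z = 0\<close> assms by (simp add: X_def power_0_left)
    qed
    have hb: "h = map_poly eps b" using psi_coeff0[of b] by (simp add: pb)
    have "lead_coeff a * lead_coeff b = 1" using ab lcp by (metis lead_coeff_mult)
    then have "eps (lead_coeff a) * eps (lead_coeff b) = 1" by (metis eps_mult eps_1)
    then have "eps (lead_coeff b) \<noteq> 0" by auto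
    then have "coeff h (degree b) \<noteq> 0" by (simp add: hb coeff_map_poly)
    then have "degree b \<le> degree h" by (rule le_degree)
    then have "degree b = 0" using dh by simp
    then have bb: "b = [:lead_coeff b:]" by (metis degree_0_id)
    have "lead_coeff b dvd 1" using \<open>lead_coeff a * lead_coeff b = 1\<close> by (metis dvdI mult.commute)
    then show ?thesis using bb is_unit_poly_iff by blast
  qed
  have irr: "irreducible p"
  proof (rule irreducibleI)
    show "p \<noteq> 0" using deg assms by auto
    show "\<not> p dvd 1"
    proof
      assume "p dvd 1"
      then obtain c where "p = [:c:]" using is_unit_poly_iff by blast
      then show False using deg assms by simp
    qed
    fix a b assume pab: "p = a * b"
    then have "psi a * psi b = F" using psip by (simp add: psi_mult)
    then have "degree (psi a) + degree (psi b) = 1" using F0 degF by (metis degree_mult_eq mult_zero_left mult_zero_right)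
    then consider "degree (psi b) = 0" | "degree (psi a) = 0" by linarith
    then show "a dvd 1 \<or> b dvd 1"
    proof cases
      case 1 then show ?thesis using key[of a b] pab by simp
    next
      case 2 then show ?thesis using key[of b a] pab by (simp add: mult.commute)
    qed
  qed
  have "degree p \<noteq> 0" using deg assms by simp
  then have "irreducible (fract_poly p)" using irr cont nonconst_poly_irreducible_iff by blast
  then show ?thesis using P by simp
qed

end
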